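(* Let $N_k=N\cup\{\Gamma\rightarrow E_1,\dots,E_n\}$ and $N_{k+1}=N\cup\{\Gamma\rightarrow E_i\}$ (a Horn transformation, $n>1$). Let $N^\bot_{k+1}$ be a conflicting core of $N_{k+1}$, and let $(\Gamma\rightarrow E_i)\sigma_j$, $1\le j\le m$, be the clauses of $N^\bot_{k+1}$ that are instances of $\Gamma\rightarrow E_i$ (taken as the replaced ones). Suppose that for each $j$ there are a substitution $\sigma'_j$, a subset $N^j_k\subseteq N_k$ and a substitution $\tau_j$ such that for every grounding substitution $\theta$, $N^j_k\tau_j\theta\cup\{(\Gamma\rightarrow E_1,\dots,E_n)\sigma'_j\theta\}\models(\Gamma\rightarrow E_i)\sigma_j\theta$. Then $$\big(N^\bot_{k+1}\setminus\{(\Gamma\rightarrow E_i)\sigma_j\mid 1\le j\le m\}\big)\cup\{(\Gamma\rightarrow E_1,\dots,E_n)\sigma'_j\mid 1\le j\le m\}\cup\bigcup_j N^j_k\tau_j$$ is a conflicting core of $N_k$.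
   Context: First-order logic without equality. A clause is a finite multiset of literals written $\Gamma \rightarrow \Delta$. A Herbrand interpretation is a set of ground atoms; $I \models \Gamma\rightarrow\Delta$ iff for every grounding substitution $\sigma$, $\Delta\sigma\cap I\neq\emptyset$ or $\Gamma\sigma\not\subseteq I$; for ground clause sets, $M\models D$ means every model of $M$ satisfies $D$. A finite clause set $N^\bot$ is a conflicting core if for every substitution $\tau$ grounding all of $N^\bot$ (one substitution for the whole set, so variables are shared among clauses) the set $N^\bot\tau$ is unsatisfiable. $N^\bot$ is a conflicting core of $N$ if moreover every $C\in N^\bot$ equals $C'\sigma$ for some $C'\in N$ and substitution $\sigma$. *)

theory Defs
  imports "HOL-Library.Multiset"
begin

datatype ('f, 'v) fterm = Var 'v | Fun 'f "('f, 'v) fterm list"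

type_synonym ('p, 'f, 'v) atom = "'p \<times> ('f, 'v) fterm list"

text \<open>A clause \<open>\<Gamma> \<rightarrow> \<Delta>\<close>: a pair of finite multisets of atoms
  (antecedent, succedent).\<close>
type_synonym ('p, 'f, 'v) clause = "('p, 'f, 'v) atom multiset \<times> ('p, 'f, 'v) atom multiset"

type_synonym ('f, 'v) subst = "'v \<Rightarrow> ('f, 'v) fterm"

fun subst_term :: "('f, 'v) fterm \<Rightarrow> ('f, 'v) subst \<Rightarrow> ('f, 'v) fterm" where
  "subst_term (Var x) \<sigma> = \<sigma> x"
| "subst_term (Fun f ts) \<sigma> = Fun f (map (\<lambda>t. subst_term t \<sigma>) ts)"

definition subst_atom :: "('p, 'f, 'v) atom \<Rightarrow> ('f, 'v) subst \<Rightarrow> ('p, 'f, 'v) atom" where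
  "subst_atom A \<sigma> = (fst A, map (\<lambda>t. subst_term t \<sigma>) (snd A))"

definition subst_cls :: "('p, 'f, 'v) clause \<Rightarrow> ('f, 'v) subst \<Rightarrow> ('p, 'f, 'v) clause" where
  "subst_cls C \<sigma> = (image_mset (\<lambda>A. subst_atom A \<sigma>) (fst C), image_mset (\<lambda>A. subst_atom A \<sigma>) (snd C))"

definition subst_cls_set :: "('p, 'f, 'v) clause set \<Rightarrow> ('f, 'v) subst \<Rightarrow> ('p, 'f, 'v) clause set" where
  "subst_cls_set N \<sigma> = (\<lambda>C. subst_cls C \<sigma>) ` N"

fun ground_term :: "('f, 'v) fterm \<Rightarrow> bool" where
  "ground_term (Var x) = False"
| "ground_term (Fun f ts) = (\<forall>t \<in> set ts. ground_term t)"

definition ground_atom :: "('p, 'f, 'v) atom \<Rightarrow> bool" where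
  "ground_atom A = (\<forall>t \<in> set (snd A). ground_term t)"

definition ground_cls :: "('p, 'f, 'v) clause \<Rightarrow> bool" where
  "ground_cls C = (\<forall>A \<in># fst C + snd C. ground_atom A)"

definition grounding_set :: "('f, 'v) subst \<Rightarrow> ('p, 'f, 'v) clause set \<Rightarrow> bool" where
  "grounding_set \<sigma> N = (\<forall>C \<in> N. ground_cls (subst_cls C \<sigma>))"

definition herbrand_interp :: "('p, 'f, 'v) atom set \<Rightarrow> bool" where
  "herbrand_interp I = (\<forall>A \<in> I. ground_atom A)"

definition true_cls :: "('p, 'f, 'v) atom set \<Rightarrow> ('p, 'f, 'v) clause \<Rightarrow> bool" where
  "true_cls I C = (\<forall>\<sigma>. ground_cls (subst_cls C \<sigma>) \<longrightarrow>
      (set_mset (snd (subst_cls C \<sigma>)) \<inter> I \<noteq> {} \<or> \<not> set_mset (fst (subst_cls C \<sigma>)) \<subseteq> I))"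

definition true_cls_set :: "('p, 'f, 'v) atom set \<Rightarrow> ('p, 'f, 'v) clause set \<Rightarrow> bool" where
  "true_cls_set I N = (\<forall>C \<in> N. true_cls I C)"

definition satisfiable :: "('p, 'f, 'v) clause set \<Rightarrow> bool" where
  "satisfiable N = (\<exists>I. herbrand_interp I \<and> true_cls_set I N)"

definition entails :: "('p, 'f, 'v) clause set \<Rightarrow> ('p, 'f, 'v) clause \<Rightarrow> bool" where
  "entails M D = (\<forall>I. herbrand_interp I \<longrightarrow> true_cls_set I M \<longrightarrow> true_cls I D)"

definition conflicting_core :: "('p, 'f, 'v) clause set \<Rightarrow> bool" where
  "conflicting_core Nb = (finite Nb \<and>
     (\<forall>\<tau>. grounding_set \<tau> Nb \<longrightarrow> \<not> satisfiable (subst_cls_set Nb \<tau>)))"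

definition conflicting_core_of :: "('p, 'f, 'v) clause set \<Rightarrow> ('p, 'f, 'v) clause set \<Rightarrow> bool" where
  "conflicting_core_of Nb N = (conflicting_core Nb \<and>
     (\<forall>C \<in> Nb. \<exists>C' \<in> N. \<exists>\<sigma>. C = subst_cls C' \<sigma>))"

end

theory Submission
  imports Defs
begin


definition gfix :: "('f, 'v) subst \<Rightarrow> ('f, 'v) subst" where
  "gfix \<tau> = (\<lambda>x. if ground_term (\<tau> x) then \<tau> x else Fun undefined [])"

lemma gfix_ground_term: "ground_term (subst_term t (gfix \<tau>))"
  by (induction t) (auto simp: gfix_def)

lemma gfix_agree_term: "ground_term (subst_term t \<tau>) \<Longrightarrow> subst_term t (gfix \<tau>) = subst_term t \<tau>"
  by (induction t) (auto simp: gfix_def)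

lemma gfix_ground_cls: "ground_cls (subst_cls C (gfix \<tau>))"
  by (auto simp: ground_cls_def subst_cls_def ground_atom_def subst_atom_def gfix_ground_term)

lemma gfix_grounding_set: "grounding_set (gfix \<tau>) N"
  by (simp add: grounding_set_def gfix_ground_cls)

lemma gfix_agree_atom: "ground_atom (subst_atom A \<tau>) \<Longrightarrow> subst_atom A (gfix \<tau>) = subst_atom A \<tau>"
  by (auto simp: ground_atom_def subst_atom_def gfix_agree_term)

lemma gfix_agree_cls: "ground_cls (subst_cls C \<tau>) \<Longrightarrow> subst_cls C (gfix \<tau>) = subst_cls C \<tau>"
  unfolding subst_cls_def ground_cls_def
  by (auto intro!: image_mset_cong gfix_agree_atom)

theorem lemma5:
  fixes N :: "('p, 'f, 'v) clause set"
    and \<Gamma> :: "('p, 'f, 'v) atom multiset"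
    and Es :: "('p, 'f, 'v) atom list"
    and i m :: nat
    and Nbot :: "('p, 'f, 'v) clause set"
    and \<sigma> \<sigma>' \<tau> :: "nat \<Rightarrow> ('f, 'v) subst"
    and Nj :: "nat \<Rightarrow> ('p, 'f, 'v) clause set"
  assumes n_gt1: "length Es > 1"
    and i_range: "i < length Es"
    and core: "conflicting_core_of Nbot (N \<union> {(\<Gamma>, {#Es ! i#})})"
    and replaced: "{subst_cls (\<Gamma>, {#Es ! i#}) (\<sigma> j) | j. j < m}
                   = {C \<in> Nbot. \<exists>\<rho>. C = subst_cls (\<Gamma>, {#Es ! i#}) \<rho>}"
    and Nj_sub: "\<forall>j < m. Nj j \<subseteq> N \<union> {(\<Gamma>, mset Es)}"
    and Nj_fin: "\<forall>j < m. finite (Nj j)"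
    and entail: "\<forall>j < m. \<forall>\<theta>.
        grounding_set \<theta> (subst_cls_set (Nj j) (\<tau> j) \<union> {subst_cls (\<Gamma>, mset Es) (\<sigma>' j),
                                                       subst_cls (\<Gamma>, {#Es ! i#}) (\<sigma> j)}) \<longrightarrow>
        entails (subst_cls_set (subst_cls_set (Nj j) (\<tau> j)) \<theta> \<union>
                   {subst_cls (subst_cls (\<Gamma>, mset Es) (\<sigma>' j)) \<theta>})
                (subst_cls (subst_cls (\<Gamma>, {#Es ! i#}) (\<sigma> j)) \<theta>)"
  shows "conflicting_core_of
           ((Nbot - {subst_cls (\<Gamma>, {#Es ! i#}) (\<sigma> j) | j. j < m})
            \<union> {subst_cls (\<Gamma>, mset Es) (\<sigma>' j) | j. j < m}
            \<union> (\<Union>j < m. subst_cls_set (Nj j) (\<tau> j)))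
           (N \<union> {(\<Gamma>, mset Es)})"
  proof -
  let ?C = "(\<Gamma>, {#Es ! i#})"
  let ?E = "(\<Gamma>, mset Es)"
  let ?R = "{subst_cls ?C (\<sigma> j) | j. j < m}"
  let ?M = "(Nbot - ?R) \<union> {subst_cls ?E (\<sigma>' j) | j. j < m} \<union> (\<Union>j < m. subst_cls_set (Nj j) (\<tau> j))"
  have finNb: "finite Nbot" using core by (simp add: conflicting_core_of_def conflicting_core_def)
  have coreNb: "\<And>t. grounding_set t Nbot \<Longrightarrow> \<not> satisfiable (subst_cls_set Nbot t)"
    using core by (simp add: conflicting_core_of_def conflicting_core_def)
  have inst: "\<forall>C \<in> Nbot. \<exists>C' \<in> N \<union> {?C}. \<exists>s. C = subst_cls C' s"
    using core by (simp add: conflicting_core_of_def)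
  have eq1: "{subst_cls ?E (\<sigma>' j) | j. j < m} = (\<lambda>j. subst_cls ?E (\<sigma>' j)) ` {..<m}" by auto
  have fin: "finite ?M"
    using finNb Nj_fin by (auto simp: eq1 subst_cls_set_def)
  have unsat: "\<not> satisfiable (subst_cls_set ?M t)" if gt: "grounding_set t ?M" for t
  proof
    assume "satisfiable (subst_cls_set ?M t)"
    then obtain I where hI: "herbrand_interp I" and mI: "true_cls_set I (subst_cls_set ?M t)"
      by (auto simp: satisfiable_def)
    have inM: "true_cls I (subst_cls D (gfix t))" if "D \<in> ?M" for D
    proof -
      have "ground_cls (subst_cls D t)" using gt that by (auto simp: grounding_set_def)
      hence "subst_cls D (gfix t) = subst_cls D t" by (rule gfix_agree_cls)
      thus ?thesis using mI that by (auto simp: true_cls_set_def subst_cls_set_def)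
    qed
    have "true_cls_set I (subst_cls_set Nbot (gfix t))"
      unfolding true_cls_set_def subst_cls_set_def
    proof
      fix C' assume "C' \<in> (\<lambda>C. subst_cls C (gfix t)) ` Nbot"
      then obtain C where C: "C \<in> Nbot" and C': "C' = subst_cls C (gfix t)" by auto
      show "true_cls I C'"
      proof (cases "C \<in> ?R")
        case False
        then show ?thesis using C C' inM by auto
      next
        case True
        then obtain j where j: "j < m" and Cj: "C = subst_cls ?C (\<sigma> j)" by auto
        have "entails (subst_cls_set (subst_cls_set (Nj j) (\<tau> j)) (gfix t) \<union>
                   {subst_cls (subst_cls ?E (\<sigma>' j)) (gfix t)})
                (subst_cls (subst_cls ?C (\<sigma> j)) (gfix t))"
          using entail j gfix_grounding_set by blast
        moreover have "true_cls_set I (subst_cls_set (subst_cls_set (Nj j) (\<tau> j)) (gfix t) \<union>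
                   {subst_cls (subst_cls ?E (\<sigma>' j)) (gfix t)})"
        proof -
          have "subst_cls ?E (\<sigma>' j) \<in> ?M" using j by blast
          moreover have "\<And>D. D \<in> subst_cls_set (Nj j) (\<tau> j) \<Longrightarrow> D \<in> ?M" using j by blast
          ultimately show ?thesis using inM
            by (auto simp: true_cls_set_def subst_cls_set_def)
        qed
        ultimately show ?thesis using hI C' Cj by (simp add: entails_def)
      qed
    qed
    hence "satisfiable (subst_cls_set Nbot (gfix t))" using hI by (auto simp: satisfiable_def)
    thus False using coreNb gfix_grounding_set by blast
  qed
  have insts: "\<forall>C \<in> ?M. \<exists>C' \<in> N \<union> {?E}. \<exists>s. C = subst_cls C' s"
  proof
    fix C assume CM: "C \<in> ?M"
    show "\<exists>C' \<in> N \<union> {?E}. \<exists>s. C = subst_cls C' s"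
    proof (cases "C \<in> Nbot - ?R")
      case True
      then obtain C' s where C': "C' \<in> N \<union> {?C}" "C = subst_cls C' s" using inst by blast
      have "C' \<noteq> ?C"
      proof
        assume "C' = ?C"
        hence "C \<in> {C \<in> Nbot. \<exists>\<rho>. C = subst_cls ?C \<rho>}" using True C' by auto
        hence "C \<in> ?R" using replaced by simp
        thus False using True by simp
      qed
      then show ?thesis using C' by auto
    next
      case False
      then have "C \<in> {subst_cls ?E (\<sigma>' j) | j. j < m} \<or> C \<in> (\<Union>j < m. subst_cls_set (Nj j) (\<tau> j))"
        using CM by blast
      then show ?thesis
      proof
        assume "C \<in> {subst_cls ?E (\<sigma>' j) | j. j < m}"
        then show ?thesis by blast
      next
        assume "C \<in> (\<Union>j < m. subst_cls_set (Nj j) (\<tau> j))"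
        then obtain j D where "j < m" "D \<in> Nj j" "C = subst_cls D (\<tau> j)"
          by (auto simp: subst_cls_set_def)
        then show ?thesis using Nj_sub by blast
      qed
    qed
  qed
  show ?thesis unfolding conflicting_core_of_def conflicting_core_def
    using fin unsat insts by blast
qed

end
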